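(* For the $2$-server problem on the line and any parameter $\lambda\in[0,1]$, the algorithm LambdaDC satisfies, for every instance $I$ and every prediction with prediction error $\eta$, \[ \mathrm{LambdaDC}(I)\le \min\left\{(1+\lambda)\left(1+\frac{\eta}{\mathrm{OPT}(I)}\right),\ 1+\frac1\lambda\right\}\mathrm{OPT}(I)+c, \] with $c\ge0$ depending only on the initial configuration (where $1/\lambda=\infty$ for $\lambda=0$). Thus it is $(1+\lambda)$-consistent and $(1+1/\lambda)$-robust.
   Context: The $k$-server problem on the line (here $k=2$): servers on $\mathbb{R}$ labeled $s_1\le s_2$, requests $r_t\in\mathbb{R}$ revealed online, each served by moving a server to it; cost = total distance moved; $\mathrm{OPT}$ is the optimal offline cost. A prediction gives for each request $r_t$ an index $p_t\in\{1,2\}$; FtP serves each request with the predicted server (relabeling by position), and $\eta=\mathrm{FtP}(I)-\mathrm{OPT}(I)$. $\alpha$-consistent: cost $\le\alpha\,\mathrm{OPT}+c$ whenever $\eta=0$; $\beta$-robust: cost $\le\beta\,\mathrm{OPT}+c$ for all predictions. LambdaDC: if $r_t<s_1$ or $r_t>s_k$, move only the closest server; if $s_i<r_t<s_{i+1}$ and $p_t\le i$, move $s_i$ at speed $1$ and $s_{i+1}$ at speed $\lambda$ towards $r_t$ until one reaches it; if $p_t\ge i+1$, the speeds are swapped. *)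

theory Defs
  imports Complex_Main
begin

text \<open>Configurations of the two servers are pairs (s1, s2) of reals; for the online
algorithms we keep the invariant s1 \<le> s2 (labelling by position).
Predictions are natural numbers in {1,2}.\<close>

definition ftp_step :: "real \<times> real \<Rightarrow> real \<Rightarrow> nat \<Rightarrow> (real \<times> real) \<times> real" where
  "ftp_step s r p =
     (let (s1, s2) = s in
      if p = 1 then ((min r s2, max r s2), \<bar>s1 - r\<bar>)
      else ((min s1 r, max s1 r), \<bar>s2 - r\<bar>))"

fun ftp_cost :: "real \<times> real \<Rightarrow> real list \<Rightarrow> nat list \<Rightarrow> real" where
  "ftp_cost s (r # rs) (p # ps) =
     (let (s', c) = ftp_step s r p in c + ftp_cost s' rs ps)"
| "ftp_cost s _ _ = 0"

text \<open>One step of LambdaDC with parameter lam (the continuous movement is resolved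
in closed form). Returns new configuration and cost.\<close>
definition ldc_step :: "real \<Rightarrow> real \<times> real \<Rightarrow> real \<Rightarrow> nat \<Rightarrow> (real \<times> real) \<times> real" where
  "ldc_step lam s r p =
     (let (s1, s2) = s; d1 = r - s1; d2 = s2 - r in
      if r \<le> s1 then ((r, s2), s1 - r)
      else if s2 \<le> r then ((s1, r), r - s2)
      else if p \<le> 1 then
        (if lam * d1 \<le> d2 then ((r, s2 - lam * d1), (1 + lam) * d1)
         else ((s1 + d2 / lam, r), d2 + d2 / lam))
      else
        (if lam * d2 \<le> d1 then ((s1 + lam * d2, r), (1 + lam) * d2)
         else ((r, s2 - d1 / lam), d1 + d1 / lam)))"

fun ldc_cost :: "real \<Rightarrow> real \<times> real \<Rightarrow> real list \<Rightarrow> nat list \<Rightarrow> real" where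
  "ldc_cost lam s (r # rs) (p # ps) =
     (let (s', c) = ldc_step lam s r p in c + ldc_cost lam s' rs ps)"
| "ldc_cost lam s _ _ = 0"

fun move_cost :: "real \<times> real \<Rightarrow> (real \<times> real) list \<Rightarrow> real" where
  "move_cost s [] = 0"
| "move_cost (a, b) ((c, d) # xs) = \<bar>a - c\<bar> + \<bar>b - d\<bar> + move_cost (c, d) xs"

definition serves :: "real list \<Rightarrow> (real \<times> real) list \<Rightarrow> bool" where
  "serves rs xs \<longleftrightarrow> length xs = length rs \<and>
     (\<forall>i < length rs. rs ! i = fst (xs ! i) \<or> rs ! i = snd (xs ! i))"

definition opt_cost :: "real \<times> real \<Rightarrow> real list \<Rightarrow> real" where
  "opt_cost s rs = Inf {move_cost s xs | xs. serves rs xs}"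

end

theory Submission
  imports Defs
begin

definition mm :: "real \<times> real \<Rightarrow> real \<times> real \<Rightarrow> real" where
 "mm a b = min (\<bar>fst a - fst b\<bar> + \<bar>snd a - snd b\<bar>) (\<bar>fst a - snd b\<bar> + \<bar>snd a - fst b\<bar>)"

lemma mm_out_left: "r \<le> a1 \<Longrightarrow> a1 \<le> a2 \<Longrightarrow> r = x \<or> r = y \<Longrightarrow> mm (r,a2) (x,y) \<le> mm (a1,a2) (x,y) - (a1 - r)"
  unfolding mm_def by (auto simp: min_def abs_if)
lemma mm_out_right: "a1 \<le> a2 \<Longrightarrow> a2 \<le> r \<Longrightarrow> r = x \<or> r = y \<Longrightarrow> mm (a1,r) (x,y) \<le> mm (a1,a2) (x,y) - (r - a2)"
  unfolding mm_def by (auto simp: min_def abs_if)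
lemma mm_in: "0 \<le> u1 \<Longrightarrow> 0 \<le> u2 \<Longrightarrow> a1 + u1 \<le> r \<Longrightarrow> r \<le> a2 - u2 \<Longrightarrow> r = x \<or> r = y \<Longrightarrow>
   mm (a1+u1,a2-u2) (x,y) \<le> mm (a1,a2) (x,y) + \<bar>u1 - u2\<bar>"
  unfolding mm_def by (auto simp: min_def abs_if)
lemma mm_lip: "mm a (c,d) \<le> mm a (x,y) + \<bar>x - c\<bar> + \<bar>y - d\<bar>"
  unfolding mm_def by (auto simp: min_def abs_if)
lemma ftp_lip: "ftp_step (f1,f2) r p = ((g1,g2),cf) \<Longrightarrow> mm a (g1,g2) \<le> mm a (f1,f2) + cf"
  unfolding mm_def ftp_step_def by (auto simp: min_def max_def abs_if split: if_splits)
lemma ftp_in1: "f1 \<le> f2 \<Longrightarrow> ftp_step (f1,f2) r 1 = ((g1,g2),cf) \<Longrightarrow> 0 \<le> u2 \<Longrightarrow> u2 \<le> u1 \<Longrightarrow> a1 + u1 \<le> r \<Longrightarrow> r \<le> a2 - u2 \<Longrightarrow>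
   mm (a1+u1,a2-u2) (g1,g2) \<le> mm (a1,a2) (f1,f2) + cf - u1 + u2"
  unfolding mm_def ftp_step_def by (auto simp: min_def max_def abs_if split: if_splits)
lemma ftp_in2: "f1 \<le> f2 \<Longrightarrow> ftp_step (f1,f2) r 2 = ((g1,g2),cf) \<Longrightarrow> 0 \<le> u1 \<Longrightarrow> u1 \<le> u2 \<Longrightarrow> a1 + u1 \<le> r \<Longrightarrow> r \<le> a2 - u2 \<Longrightarrow>
   mm (a1+u1,a2-u2) (g1,g2) \<le> mm (a1,a2) (f1,f2) + cf - u2 + u1"
  unfolding mm_def ftp_step_def by (auto simp: min_def max_def abs_if split: if_splits)

lemma ldc_shape:
  assumes "0 \<le> lam" "lam \<le> 1" "a1 \<le> a2" "ldc_step lam (a1,a2) r p = ((b1,b2),c)"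
  shows "(r \<le> a1 \<and> b1 = r \<and> b2 = a2 \<and> c = a1 - r) \<or>
         (a2 \<le> r \<and> b1 = a1 \<and> b2 = r \<and> c = r - a2) \<or>
         (\<exists>u1 u2. 0 \<le> u1 \<and> 0 \<le> u2 \<and> b1 = a1 + u1 \<and> b2 = a2 - u2 \<and> b1 \<le> r \<and> r \<le> b2 \<and>
            c = u1 + u2 \<and> (if p \<le> 1 then u2 = lam * u1 else u1 = lam * u2))"
proof (cases "r \<le> a1")
  case True then show ?thesis using assms(4) by (simp add: ldc_step_def)
next
  case n1: False
  show ?thesis
  proof (cases "a2 \<le> r")
    case True then show ?thesis using assms(4) n1 by (simp add: ldc_step_def)
  next
    case n2: False
    define d1 where "d1 = r - a1"
    define d2 where "d2 = a2 - r"
    have d1p: "d1 > 0" and d2p: "d2 > 0" using n1 n2 by (auto simp: d1_def d2_def)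
    show ?thesis
    proof (cases "p \<le> 1")
      case p1: True
      show ?thesis
      proof (cases "lam * d1 \<le> d2")
        case True
        then have "b1 = a1 + d1 \<and> b2 = a2 - lam * d1 \<and> c = d1 + lam * d1"
          using assms(4) n1 n2 p1 by (auto simp: ldc_step_def d1_def d2_def Let_def algebra_simps)
        then show ?thesis using True d1p assms(1) p1
          by (intro disjI2 exI[of _ d1] exI[of _ "lam * d1"]) (auto simp: d1_def d2_def)
      next
        case False
        have lp: "lam > 0" using False d2p assms(1) by (cases "lam = 0") auto
        have e: "lam * (d2 / lam) = d2" using lp by simp
        have lt: "d2 / lam < d1" using False lp by (simp add: field_simps mult.commute)
        have "b1 = a1 + d2 / lam \<and> b2 = a2 - d2 \<and> c = d2 / lam + d2"
          using assms(4) n1 n2 p1 False by (auto simp: ldc_step_def d1_def d2_def Let_def algebra_simps)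
        then show ?thesis using e lt d2p lp p1
          by (intro disjI2 exI[of _ "d2 / lam"] exI[of _ d2]) (auto simp: d1_def d2_def)
      qed
    next
      case p1: False
      show ?thesis
      proof (cases "lam * d2 \<le> d1")
        case True
        then have "b1 = a1 + lam * d2 \<and> b2 = a2 - d2 \<and> c = d2 + lam * d2"
          using assms(4) n1 n2 p1 by (auto simp: ldc_step_def d1_def d2_def Let_def algebra_simps)
        then show ?thesis using True d2p assms(1) p1
          by (intro disjI2 exI[of _ "lam * d2"] exI[of _ d2]) (auto simp: d1_def d2_def)
      next
        case False
        have lp: "lam > 0" using False d1p assms(1) by (cases "lam = 0") auto
        have e: "lam * (d1 / lam) = d1" using lp by simp
        have lt: "d1 / lam < d2" using False lp by (simp add: field_simps mult.commute)
        have "b1 = a1 + d1 \<and> b2 = a2 - d1 / lam \<and> c = d1 + d1 / lam"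
          using assms(4) n1 n2 p1 False by (auto simp: ldc_step_def d1_def d2_def Let_def algebra_simps)
        then show ?thesis using e lt d1p lp p1
          by (intro disjI2 exI[of _ d1] exI[of _ "d1 / lam"]) (auto simp: d1_def d2_def)
      qed
    qed
  qed
qed

lemma mm_nonneg: "mm a b \<ge> 0"
  unfolding mm_def by simp

lemma mm_self: "mm a a = 0"
  unfolding mm_def by (simp add: min_def)

lemma move_cost_nonneg: "move_cost s xs \<ge> 0"
proof (induction s xs rule: move_cost.induct)
  case (2 a b c d xs) then show ?case by simp
qed simp

lemma step1:
  assumes l0: "0 \<le> lam" and l1: "lam \<le> 1" and a: "a1 \<le> a2" and f: "f1 \<le> f2" and p: "p \<in> {1,2}"
    and L: "ldc_step lam (a1,a2) r p = ((b1,b2),c)" and F: "ftp_step (f1,f2) r p = ((g1,g2),cf)"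
  shows "c + (1+lam)*mm (b1,b2) (g1,g2) + lam*(b2-b1) \<le> (1+lam)*cf + (1+lam)*mm (a1,a2) (f1,f2) + lam*(a2-a1)"
proof -
  have rg: "r = g1 \<or> r = g2" using F by (auto simp: ftp_step_def min_def max_def split: if_splits)
  from ldc_shape[OF l0 l1 a L] show ?thesis
  proof (elim disjE exE conjE)
    assume h: "r \<le> a1" "b1 = r" "b2 = a2" "c = a1 - r"
    have "mm (b1,b2) (g1,g2) \<le> mm (a1,a2) (f1,f2) + cf - (a1 - r)"
      using mm_out_left[OF h(1) a rg] ftp_lip[OF F, of "(a1,a2)"] h by simp
    then have "(1+lam)*mm (b1,b2) (g1,g2) \<le> (1+lam)*(mm (a1,a2) (f1,f2) + cf - (a1 - r))"
      using l0 by (intro mult_left_mono) auto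
    moreover have "(1+lam)*(mm (a1,a2) (f1,f2) + cf - (a1 - r)) = (1+lam)*mm (a1,a2) (f1,f2) + (1+lam)*cf - (a1 - r) - lam*(a1-r)"
      by (simp add: algebra_simps)
    moreover have "lam*(b2-b1) = lam*(a2-a1) + lam*(a1-r)" using h by (simp add: algebra_simps)
    ultimately show ?thesis using h by linarith
  next
    assume h: "a2 \<le> r" "b1 = a1" "b2 = r" "c = r - a2"
    have "mm (b1,b2) (g1,g2) \<le> mm (a1,a2) (f1,f2) + cf - (r - a2)"
      using mm_out_right[OF a h(1) rg] ftp_lip[OF F, of "(a1,a2)"] h by simp
    then have "(1+lam)*mm (b1,b2) (g1,g2) \<le> (1+lam)*(mm (a1,a2) (f1,f2) + cf - (r - a2))"
      using l0 by (intro mult_left_mono) auto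
    moreover have "(1+lam)*(mm (a1,a2) (f1,f2) + cf - (r - a2)) = (1+lam)*mm (a1,a2) (f1,f2) + (1+lam)*cf - (r - a2) - lam*(r - a2)"
      by (simp add: algebra_simps)
    moreover have "lam*(b2-b1) = lam*(a2-a1) + lam*(r-a2)" using h by (simp add: algebra_simps)
    ultimately show ?thesis using h by linarith
  next
    fix u1 u2
    assume h: "0 \<le> u1" "0 \<le> u2" "b1 = a1 + u1" "b2 = a2 - u2" "b1 \<le> r" "r \<le> b2" "c = u1 + u2"
      "if p \<le> 1 then u2 = lam * u1 else u1 = lam * u2"
    show ?thesis
    proof (cases "p = 1")
      case True
      have u: "u2 = lam * u1" using h(8) True by simp
      have "u2 \<le> u1" using u l1 h(1) using mult_right_mono[of lam 1] by simp
      then have "mm (b1,b2) (g1,g2) \<le> mm (a1,a2) (f1,f2) + cf - u1 + u2"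
        using ftp_in1[OF f, of r g1 g2 cf u2 u1 a1 a2] F True h by simp
      then have "(1+lam)*mm (b1,b2) (g1,g2) \<le> (1+lam)*(mm (a1,a2) (f1,f2) + cf - u1 + u2)"
        using l0 by (intro mult_left_mono) auto
      moreover have "(1+lam)*(mm (a1,a2) (f1,f2) + cf - u1 + u2) = (1+lam)*mm (a1,a2) (f1,f2) + (1+lam)*cf - u1 - lam*u1 + u2 + lam*u2"
        by (simp add: algebra_simps)
      moreover have "lam*(b2-b1) = lam*(a2-a1) - lam*u1 - lam*u2" unfolding h(3,4) by (simp add: algebra_simps)
      ultimately show ?thesis using h u by linarith
    next
      case False
      then have p2: "p = 2" using p by auto
      have u: "u1 = lam * u2" using h(8) p2 by simp
      have "u1 \<le> u2" using u l1 h(2) using mult_right_mono[of lam 1] by simp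
      then have "mm (b1,b2) (g1,g2) \<le> mm (a1,a2) (f1,f2) + cf - u2 + u1"
        using ftp_in2[OF f, of r g1 g2 cf u1 u2 a1 a2] F p2 h by simp
      then have "(1+lam)*mm (b1,b2) (g1,g2) \<le> (1+lam)*(mm (a1,a2) (f1,f2) + cf - u2 + u1)"
        using l0 by (intro mult_left_mono) auto
      moreover have "(1+lam)*(mm (a1,a2) (f1,f2) + cf - u2 + u1) = (1+lam)*mm (a1,a2) (f1,f2) + (1+lam)*cf - u2 - lam*u2 + u1 + lam*u1"
        by (simp add: algebra_simps)
      moreover have "lam*(b2-b1) = lam*(a2-a1) - lam*u1 - lam*u2" unfolding h(3,4) by (simp add: algebra_simps)
      ultimately show ?thesis using h u by linarith
    qed
  qed
qed

lemma step2:
  assumes l0: "0 < lam" and l1: "lam \<le> 1" and a: "a1 \<le> a2" and rg: "r = x \<or> r = y"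
    and L: "ldc_step lam (a1,a2) r p = ((b1,b2),c)"
  shows "lam * c + (1+lam)*mm (b1,b2) (x,y) + (b2-b1) \<le> (1+lam)*mm (a1,a2) (x,y) + (a2-a1)"
proof -
  from ldc_shape[OF less_imp_le[OF l0] l1 a L] show ?thesis
  proof (elim disjE exE conjE)
    assume h: "r \<le> a1" "b1 = r" "b2 = a2" "c = a1 - r"
    have "mm (b1,b2) (x,y) \<le> mm (a1,a2) (x,y) - (a1 - r)"
      using mm_out_left[OF h(1) a rg] h by simp
    then have "(1+lam)*mm (b1,b2) (x,y) \<le> (1+lam)*(mm (a1,a2) (x,y) - (a1 - r))"
      using l0 by (intro mult_left_mono) auto
    moreover have "(1+lam)*(mm (a1,a2) (x,y) - (a1 - r)) = (1+lam)*mm (a1,a2) (x,y) - (a1 - r) - lam*(a1-r)"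
      by (simp add: algebra_simps)
    moreover have "lam*c = lam*(a1-r)" using h by simp
    ultimately show ?thesis using h by linarith
  next
    assume h: "a2 \<le> r" "b1 = a1" "b2 = r" "c = r - a2"
    have "mm (b1,b2) (x,y) \<le> mm (a1,a2) (x,y) - (r - a2)"
      using mm_out_right[OF a h(1) rg] h by simp
    then have "(1+lam)*mm (b1,b2) (x,y) \<le> (1+lam)*(mm (a1,a2) (x,y) - (r - a2))"
      using l0 by (intro mult_left_mono) auto
    moreover have "(1+lam)*(mm (a1,a2) (x,y) - (r - a2)) = (1+lam)*mm (a1,a2) (x,y) - (r - a2) - lam*(r - a2)"
      by (simp add: algebra_simps)
    moreover have "lam*c = lam*(r - a2)" using h by simp
    ultimately show ?thesis using h by linarith
  next
    fix u1 u2
    assume h: "0 \<le> u1" "0 \<le> u2" "b1 = a1 + u1" "b2 = a2 - u2" "b1 \<le> r" "r \<le> b2" "c = u1 + u2"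
      "if p \<le> 1 then u2 = lam * u1 else u1 = lam * u2"
    have m: "mm (b1,b2) (x,y) \<le> mm (a1,a2) (x,y) + \<bar>u1 - u2\<bar>"
      using mm_in[of u1 u2 a1 r a2 x y] h rg by simp
    then have m2: "(1+lam)*mm (b1,b2) (x,y) \<le> (1+lam)*(mm (a1,a2) (x,y) + \<bar>u1 - u2\<bar>)"
      using l0 by (intro mult_left_mono) auto
    show ?thesis
    proof (cases "p \<le> 1")
      case True
      have u: "u2 = lam * u1" using h(8) True by simp
      have "u2 \<le> u1" using u l1 h(1) using mult_right_mono[of lam 1] by simp
      then have "\<bar>u1 - u2\<bar> = u1 - u2" by simp
      then have m3: "(1+lam)*mm (b1,b2) (x,y) \<le> (1+lam)*(mm (a1,a2) (x,y) + (u1 - u2))" using m2 by simp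
      moreover have "(1+lam)*(mm (a1,a2) (x,y) + (u1 - u2)) = (1+lam)*mm (a1,a2) (x,y) + u1 - u2 + lam*u1 - lam*u2"
        by (simp add: algebra_simps)
      moreover have "lam*c = lam*u1 + lam*u2" using h by (simp add: algebra_simps)
      ultimately show ?thesis using h u by linarith
    next
      case False
      have u: "u1 = lam * u2" using h(8) False by simp
      have "u1 \<le> u2" using u l1 h(2) using mult_right_mono[of lam 1] by simp
      then have "\<bar>u1 - u2\<bar> = u2 - u1" by simp
      then have m3: "(1+lam)*mm (b1,b2) (x,y) \<le> (1+lam)*(mm (a1,a2) (x,y) + (u2 - u1))" using m2 by simp
      moreover have "(1+lam)*(mm (a1,a2) (x,y) + (u2 - u1)) = (1+lam)*mm (a1,a2) (x,y) + u2 - u1 + lam*u2 - lam*u1"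
        by (simp add: algebra_simps)
      moreover have "lam*c = lam*u1 + lam*u2" using h by (simp add: algebra_simps)
      ultimately show ?thesis using h u by linarith
    qed
  qed
qed

lemma ftp_sorted: "ftp_step (f1,f2) r p = ((g1,g2),cf) \<Longrightarrow> g1 \<le> g2"
  by (auto simp: ftp_step_def split: if_splits)

lemma ldc_sorted: "0 \<le> lam \<Longrightarrow> lam \<le> 1 \<Longrightarrow> a1 \<le> a2 \<Longrightarrow> ldc_step lam (a1,a2) r p = ((b1,b2),c) \<Longrightarrow> b1 \<le> b2"
  using ldc_shape[of lam a1 a2 r p b1 b2 c] by auto

lemma part1:
  assumes l0: "0 \<le> lam" and l1: "lam \<le> 1"
  shows "\<forall>a1 a2 f1 f2 ps. a1 \<le> a2 \<longrightarrow> f1 \<le> f2 \<longrightarrow> set ps \<subseteq> {1,2} \<longrightarrow>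
     ldc_cost lam (a1,a2) rs ps \<le> (1+lam)*ftp_cost (f1,f2) rs ps + (1+lam)*mm (a1,a2) (f1,f2) + lam*(a2-a1)"
proof (induction rs)
  case Nil
  then show ?case using l0 by (simp add: mm_nonneg)
next
  case (Cons r rs)
  show ?case
  proof (intro allI impI)
    fix a1 a2 f1 f2 :: real and ps :: "nat list"
    assume a: "a1 \<le> a2" and f: "f1 \<le> f2" and ps: "set ps \<subseteq> {1::nat,2}"
    show "ldc_cost lam (a1,a2) (r#rs) ps \<le> (1+lam)*ftp_cost (f1,f2) (r#rs) ps + (1+lam)*mm (a1,a2) (f1,f2) + lam*(a2-a1)"
    proof (cases ps)
      case Nil
      then show ?thesis using l0 a by (simp add: mm_nonneg)
    next
      case (Cons p ps')
      obtain b1 b2 c where L: "ldc_step lam (a1,a2) r p = ((b1,b2),c)" by (metis prod.collapse)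
      obtain g1 g2 cf where F: "ftp_step (f1,f2) r p = ((g1,g2),cf)" by (metis prod.collapse)
      have p: "p \<in> {1,2}" using ps Cons by auto
      have IH: "ldc_cost lam (b1,b2) rs ps' \<le> (1+lam)*ftp_cost (g1,g2) rs ps' + (1+lam)*mm (b1,b2) (g1,g2) + lam*(b2-b1)"
        using Cons.IH ldc_sorted[OF l0 l1 a L] ftp_sorted[OF F] ps \<open>ps = p # ps'\<close> by auto
      have S: "c + (1+lam)*mm (b1,b2) (g1,g2) + lam*(b2-b1) \<le> (1+lam)*cf + (1+lam)*mm (a1,a2) (f1,f2) + lam*(a2-a1)"
        using step1[OF l0 l1 a f p L F] .
      have e1: "ldc_cost lam (a1,a2) (r#rs) ps = c + ldc_cost lam (b1,b2) rs ps'" using L Cons by simp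
      have e2: "ftp_cost (f1,f2) (r#rs) ps = cf + ftp_cost (g1,g2) rs ps'" using F Cons by simp
      show ?thesis unfolding e1 e2 using IH S by (simp add: algebra_simps)
    qed
  qed
qed

lemma part2:
  assumes l0: "0 < lam" and l1: "lam \<le> 1"
  shows "\<forall>a1 a2 x y ps xs. a1 \<le> a2 \<longrightarrow> serves rs xs \<longrightarrow>
     lam * ldc_cost lam (a1,a2) rs ps \<le> (1+lam)*move_cost (x,y) xs + (1+lam)*mm (a1,a2) (x,y) + (a2-a1)"
proof (induction rs)
  case Nil
  then show ?case using l0 by (simp add: mm_nonneg move_cost_nonneg)
next
  case (Cons r rs)
  show ?case
  proof (intro allI impI)
    fix a1 a2 x y :: real and ps :: "nat list" and xs
    assume a: "a1 \<le> a2" and sv: "serves (r#rs) xs"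
    obtain c0 d0 xs' where xs: "xs = (c0,d0) # xs'" using sv by (cases xs) (auto simp: serves_def)
    have rg: "r = c0 \<or> r = d0" using sv xs by (auto simp: serves_def)
    have sv': "serves rs xs'" using sv xs unfolding serves_def by auto
    have mc: "move_cost (x,y) xs = \<bar>x - c0\<bar> + \<bar>y - d0\<bar> + move_cost (c0,d0) xs'" using xs by simp
    have lip: "mm (a1,a2) (c0,d0) \<le> mm (a1,a2) (x,y) + \<bar>x - c0\<bar> + \<bar>y - d0\<bar>" by (rule mm_lip)
    then have lip2: "(1+lam)*mm (a1,a2) (c0,d0) \<le> (1+lam)*(mm (a1,a2) (x,y) + \<bar>x - c0\<bar> + \<bar>y - d0\<bar>)"
      using l0 by (intro mult_left_mono) auto
    show "lam * ldc_cost lam (a1,a2) (r#rs) ps \<le> (1+lam)*move_cost (x,y) xs + (1+lam)*mm (a1,a2) (x,y) + (a2-a1)"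
    proof (cases ps)
      case Nil
      then show ?thesis using l0 a by (simp add: mm_nonneg move_cost_nonneg)
    next
      case (Cons p ps')
      obtain b1 b2 c where L: "ldc_step lam (a1,a2) r p = ((b1,b2),c)" by (metis prod.collapse)
      have IH: "lam * ldc_cost lam (b1,b2) rs ps' \<le> (1+lam)*move_cost (c0,d0) xs' + (1+lam)*mm (b1,b2) (c0,d0) + (b2-b1)"
        using Cons.IH ldc_sorted[OF less_imp_le[OF l0] l1 a L] sv' by auto
      have S: "lam * c + (1+lam)*mm (b1,b2) (c0,d0) + (b2-b1) \<le> (1+lam)*mm (a1,a2) (c0,d0) + (a2-a1)"
        using step2[OF l0 l1 a rg L] .
      have e1: "ldc_cost lam (a1,a2) (r#rs) ps = c + ldc_cost lam (b1,b2) rs ps'" using L Cons by simp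
      show ?thesis unfolding e1 mc using IH S lip2 by (simp add: algebra_simps)
    qed
  qed
qed

lemma serves_ex: "serves rs (map (\<lambda>r. (r, r)) rs)"
  by (simp add: serves_def)

lemma opt_bound:
  assumes k: "k > 0" and h: "\<And>xs. serves rs xs \<Longrightarrow> A \<le> k * move_cost s xs + C"
  shows "A \<le> k * opt_cost s rs + C"
proof -
  let ?S = "{move_cost s xs | xs. serves rs xs}"
  have ne: "?S \<noteq> {}" using serves_ex by blast
  have "(A - C) / k \<le> Inf ?S"
  proof (rule cInf_greatest[OF ne])
    fix m assume "m \<in> ?S"
    then obtain xs where "serves rs xs" "m = move_cost s xs" by blast
    then show "(A - C) / k \<le> m" using h[of xs] k by (simp add: field_simps)
  qed
  then show ?thesis using k unfolding opt_cost_def by (simp add: field_simps)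
qed

theorem theorem4:
  fixes lam s1 s2 :: real
  assumes "0 \<le> lam" and "lam \<le> 1" and "s1 \<le> s2"
  shows "\<exists>c \<ge> 0. \<forall>rs ps. length ps = length rs \<longrightarrow> set ps \<subseteq> {1, 2} \<longrightarrow>
           (let opt = opt_cost (s1, s2) rs;
                eta = ftp_cost (s1, s2) rs ps - opt;
                alg = ldc_cost lam (s1, s2) rs ps
            in alg \<le> (1 + lam) * (opt + eta) + c \<and>
               (lam > 0 \<longrightarrow> alg \<le> (1 + 1 / lam) * opt + c))"
proof -
  define c2 where "c2 = (if lam > 0 then (s2 - s1) / lam else 0)"
  define c where "c = lam * (s2 - s1) + c2"
  have c2: "c2 \<ge> 0" using assms by (simp add: c2_def)
  have c1: "lam * (s2 - s1) \<ge> 0" using assms by simp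
  have "c \<ge> 0" using c1 c2 by (simp add: c_def)
  moreover have "\<forall>rs ps. length ps = length rs \<longrightarrow> set ps \<subseteq> {1, 2} \<longrightarrow>
           (let opt = opt_cost (s1, s2) rs;
                eta = ftp_cost (s1, s2) rs ps - opt;
                alg = ldc_cost lam (s1, s2) rs ps
            in alg \<le> (1 + lam) * (opt + eta) + c \<and>
               (lam > 0 \<longrightarrow> alg \<le> (1 + 1 / lam) * opt + c))"
  proof (intro allI impI)
    fix rs :: "real list" and ps :: "nat list"
    assume "length ps = length rs" and ps: "set ps \<subseteq> {1, 2}"
    have "ldc_cost lam (s1, s2) rs ps \<le> (1+lam) * ftp_cost (s1,s2) rs ps + (1+lam)*mm (s1,s2) (s1,s2) + lam*(s2-s1)"
      using part1[OF assms(1,2), of rs] assms(3) ps by blast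
    then have P1: "ldc_cost lam (s1, s2) rs ps \<le> (1+lam) * ftp_cost (s1,s2) rs ps + c"
      using c2 by (simp add: mm_self c_def)
    have P2: "lam > 0 \<Longrightarrow> ldc_cost lam (s1, s2) rs ps \<le> (1 + 1 / lam) * opt_cost (s1, s2) rs + c"
    proof -
      assume l: "lam > 0"
      have "ldc_cost lam (s1, s2) rs ps \<le> (1 + 1 / lam) * opt_cost (s1, s2) rs + c2"
      proof (rule opt_bound)
        show "1 + 1 / lam > 0" using l by (simp add: add_pos_pos)
        fix xs assume sv: "serves rs xs"
        have "lam * ldc_cost lam (s1, s2) rs ps \<le> (1+lam)*move_cost (s1,s2) xs + (1+lam)*mm (s1,s2) (s1,s2) + (s2-s1)"
          using part2[OF l assms(2), of rs] sv assms(3) by blast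
        then have "lam * ldc_cost lam (s1, s2) rs ps \<le> (1+lam)*move_cost (s1,s2) xs + (s2-s1)"
          by (simp add: mm_self)
        then have "ldc_cost lam (s1, s2) rs ps \<le> ((1+lam)*move_cost (s1,s2) xs + (s2-s1)) / lam"
          using l by (simp add: pos_le_divide_eq mult.commute)
        moreover have "((1+lam)*move_cost (s1,s2) xs + (s2-s1)) / lam = (1 + 1 / lam) * move_cost (s1, s2) xs + c2"
          using l by (simp add: c2_def field_simps)
        ultimately show "ldc_cost lam (s1, s2) rs ps \<le> (1 + 1 / lam) * move_cost (s1, s2) xs + c2"
          by simp
      qed
      then show ?thesis using c1 by (simp add: c_def)
    qed
    show "let opt = opt_cost (s1, s2) rs;
                eta = ftp_cost (s1, s2) rs ps - opt;
                alg = ldc_cost lam (s1, s2) rs ps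
            in alg \<le> (1 + lam) * (opt + eta) + c \<and>
               (lam > 0 \<longrightarrow> alg \<le> (1 + 1 / lam) * opt + c)"
      using P1 P2 by (simp add: Let_def)
  qed
  ultimately show ?thesis by blast
qed

end
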